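(* Let $\varepsilon>0$ and let $f$ be holomorphic on $(1+\varepsilon)\mathbb{D}=\{z\in\mathbb{C}:|z|<1+\varepsilon\}$ such that $f(\overline{\mathbb{D}})=\overline{\mathbb{D}}$ and $f((1+\varepsilon)\mathbb{D})\subset(1+\varepsilon)\mathbb{D}$. Then $f$ is a rotation, i.e. there is $\beta\in\mathbb{C}$ with $|\beta|=1$ such that $f(z)=\beta z$ for all $z$.
   Context: $\mathbb{D}$ is the open unit disc and $\overline{\mathbb{D}}$ its closure. *)

theory Defs
  imports "HOL-Complex_Analysis.Complex_Analysis"
begin

end

theory Submission
  imports Defs
begin

theorem lemma1p5:
  fixes f :: "complex \<Rightarrow> complex" and \<epsilon> :: real
  assumes "\<epsilon> > 0"
    and "f holomorphic_on ball 0 (1 + \<epsilon>)"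
    and "f ` cball 0 1 = cball 0 1"
    and "f ` ball 0 (1 + \<epsilon>) \<subseteq> ball 0 (1 + \<epsilon>)"
  shows "\<exists>\<beta>. norm \<beta> = 1 \<and> (\<forall>z\<in>ball 0 (1 + \<epsilon>). f z = \<beta> * z)"
proof -
  define r where "r = 1 + \<epsilon>"
  have r1: "r > 1" using assms(1) by (simp add: r_def)
  define h where "h z = f (of_real r * z) / of_real r" for z
  have hol: "h holomorphic_on ball 0 1"
  proof -
    have "(\<lambda>z::complex. of_real r * z) ` ball 0 1 \<subseteq> ball 0 r"
    proof -
      have nr: "norm (of_real r * z) < r" if "norm z < 1" for z :: complex
      proof -
        have "r * norm z < r" using r1 that by simp
        then show ?thesis using r1 by (simp add: norm_mult)
      qed
      show ?thesis using nr by (auto simp only: image_subset_iff mem_ball_0)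
    qed
    then have "(f \<circ> (\<lambda>z. of_real r * z)) holomorphic_on ball 0 1"
      by (intro holomorphic_on_compose_gen[OF _ assms(2)[folded r_def]]) (auto intro: holomorphic_intros)
    then show ?thesis unfolding h_def using r1
      by (intro holomorphic_intros) (auto simp: o_def)
  qed
  have hlt: "norm (h z) < 1" if "norm z < 1" for z
  proof -
    have "norm (of_real r * z) < r" using that r1 by (simp add: norm_mult)
    then have "of_real r * z \<in> ball 0 r" by (simp only: mem_ball_0)
    then have "f (of_real r * z) \<in> ball 0 r" using assms(4) unfolding r_def by blast
    then have "norm (f (of_real r * z)) < r" by (simp only: mem_ball_0)
    then show ?thesis using r1 by (simp add: h_def norm_divide)
  qed
  have pre: "\<exists>\<zeta>. norm \<zeta> \<le> 1 / r \<and> h \<zeta> = w / of_real r" if "norm w = 1" for w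
  proof -
    have "w \<in> f ` cball 0 1" using assms(3) that by simp
    then obtain z where "z \<in> cball 0 1" "w = f z" by blast
    then have z: "norm z \<le> 1" "f z = w" by auto
    have "of_real r * (z / of_real r) = z" using r1 by simp
    moreover have "norm (z / of_real r) \<le> 1 / r" using z r1 by (simp add: norm_divide divide_right_mono)
    ultimately show ?thesis using z r1
      by (intro exI[of _ "z / of_real r"]) (simp add: h_def)
  qed
  define b where "b = h 0"
  have b1: "norm b < 1" using hlt by (simp add: b_def)
  have b0: "b = 0"
  proof (rule ccontr)
    assume bn: "b \<noteq> 0"
    define t where "t = norm b"
    define u where "u = b / of_real t"
    have t0: "t > 0" "t < 1" using bn b1 by (auto simp: t_def)
    have nu: "norm u = 1" using t0 by (simp add: u_def norm_divide t_def)
    have bu: "b = of_real t * u" using t0 by (simp add: u_def)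
    have cu: "cnj u * u = 1"
      by (metis complex_norm_square mult.commute nu of_real_1 power_one)
    define g where "g = Moebius_function 0 b \<circ> h"
    have gh: "g holomorphic_on ball 0 1" unfolding g_def
      by (rule holomorphic_on_compose_gen[OF hol Moebius_function_holomorphic[OF b1]])
         (use hlt in auto)
    have g0: "g 0 = 0" by (simp add: g_def b_def Moebius_function_eq_zero)
    have glt: "norm (g z) < 1" if "norm z < 1" for z
      using Moebius_function_norm_lt_1[OF b1 hlt[OF that]] by (simp add: g_def)
    obtain \<zeta> where \<zeta>: "norm \<zeta> \<le> 1 / r" "h \<zeta> = - u / of_real r"
      using pre[of "-u"] nu by auto
    have zl: "norm \<zeta> < 1" proof -
    have "1 / r < 1" using r1 by simp
    then show ?thesis using \<zeta>(1) by linarith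
  qed
    have "norm (g \<zeta>) \<le> norm \<zeta>" by (rule Schwarz_Lemma(1)[OF gh g0 glt zl])
    then have le: "norm (g \<zeta>) \<le> 1 / r" using \<zeta>(1) by linarith
    define s where "s = 1 / r"
    have s0: "s > 0" "s < 1" using r1 by (auto simp: s_def)
    have hz: "h \<zeta> = - u * of_real s" using \<zeta>(2) by (simp add: s_def)
    have c1: "cnj (of_real t * u) * (- u * of_real s) = - of_real (t * s)"
    proof -
      have "cnj (of_real t * u) * (- u * of_real s) = - (of_real t * of_real s) * (cnj u * u)"
        by (simp add: algebra_simps)
      then show ?thesis using cu by simp
    qed
    have c2: "- u * of_real s - of_real t * u = - u * of_real (s + t)"
      by (simp add: algebra_simps)
    have "g \<zeta> = (- u * of_real s - of_real t * u) / (1 - cnj (of_real t * u) * (- u * of_real s))"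
      by (simp add: g_def Moebius_function_simple hz bu)
    also have "\<dots> = (- u * of_real (s + t)) / of_real (1 + t * s)"
      by (simp only: c1 c2) simp
    finally have gz: "g \<zeta> = (- u * of_real (s + t)) / of_real (1 + t * s)" .
    have "norm (g \<zeta>) = norm u * \<bar>s + t\<bar> / \<bar>1 + t * s\<bar>"
      unfolding gz by (simp only: norm_divide norm_mult norm_minus_cancel norm_of_real)
    then have "norm (g \<zeta>) = (s + t) / (1 + t * s)"
      using s0 t0 nu by simp
    moreover have "(s + t) / (1 + t * s) > s"
    proof -
      have "s * s < s * 1" using s0 by (intro mult_strict_left_mono) auto
      then have "s * s < 1" using s0 by linarith
      then have "t * (s * s) < t" using t0 by simp
      then have "s * (1 + t * s) < s + t" by (simp add: algebra_simps)
      moreover have "1 + t * s > 0" using s0 t0 by (metis add_pos_pos mult_pos_pos zero_less_one)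
      ultimately show ?thesis by (simp only: pos_less_divide_eq)
    qed
    moreover have "1 / r = s" by (simp add: s_def)
    ultimately show False using le by simp
  qed
  have h0: "h 0 = 0" using b0 b_def by simp
  obtain \<zeta> where \<zeta>: "norm \<zeta> \<le> 1 / r" "h \<zeta> = 1 / of_real r"
    using pre[of 1] by auto
  have z1: "norm \<zeta> < 1" proof -
    have "1 / r < 1" using r1 by simp
    then show ?thesis using \<zeta>(1) by linarith
  qed
  have nh: "norm (h \<zeta>) = 1 / r" using r1 \<zeta>(2) by (simp add: norm_divide)
  have "norm (h \<zeta>) \<le> norm \<zeta>" using Schwarz_Lemma(1)[OF hol h0 hlt z1] .
  then have eq: "norm (h \<zeta>) = norm \<zeta>" using nh \<zeta>(1) by simp
  have "\<zeta> \<noteq> 0" using eq nh r1 by auto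
  then obtain \<alpha> where \<alpha>: "\<forall>z. norm z < 1 \<longrightarrow> h z = \<alpha> * z" "norm \<alpha> = 1"
    using Schwarz_Lemma(3)[OF hol h0 hlt z1] z1 eq by blast
  show ?thesis
  proof (intro exI conjI ballI)
    show "norm \<alpha> = 1" by fact
    fix y :: complex assume y: "y \<in> ball 0 (1 + \<epsilon>)"
    have "norm y < r" using y by (simp add: r_def)
    then have ny: "norm (y / of_real r) < 1" using r1 by (simp add: norm_divide)
    have "f y = of_real r * h (y / of_real r)" using r1 by (simp add: h_def)
    also have "\<dots> = \<alpha> * y" using \<alpha>(1) ny r1 by simp
    finally show "f y = \<alpha> * y" .
  qed
qed

end
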